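(* Let $S$ be a subset with $\mathbb{R}\times[0,1)\subset S\subset\mathbb{R}\times[0,1]$ which is open in $\mathbb{R}\times[0,1]$. Then there exist a set $S'$ and a homeomorphism $h:S\to S'$ such that: (1) $\mathbb{R}\times[0,1)\subset S'\subset S\subset\mathbb{R}\times[0,1]$; (2) the connected components of $S'\cap(\mathbb{R}\times\{1\})$ have closures which are bounded in $\mathbb{R}^2$ and mutually disjoint; (3) $h$ is the identity on $\mathbb{R}\times\{0\}$; (4) $h$ preserves the second coordinate, i.e. $h(x,y)=(h_1(x,y),y)$ for all $(x,y)\in S$ (in particular $h$ maps horizontal leaves to horizontal leaves). *)

theory Defs
  imports "HOL-Analysis.Analysis"
begin

end

theory Submission
  imports Defs
begin

definition th :: "real \<Rightarrow> real" where "th x = x / (1 + \<bar>x\<bar>)"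
definition thi :: "real \<Rightarrow> real" where "thi u = u / (1 - \<bar>u\<bar>)"

lemma th_bound: "\<bar>th x\<bar> < 1"
  unfolding th_def by (auto simp: abs_if divide_simps)

lemma thi_th[simp]: "thi (th x) = x"
  unfolding th_def thi_def by (auto simp: abs_if divide_simps split: if_splits)

lemma th_thi: "\<bar>u\<bar> < 1 \<Longrightarrow> th (thi u) = u"
  unfolding th_def thi_def by (auto simp: abs_if divide_simps split: if_splits)

lemma th_sign: "(0 \<le> th x) = (0 \<le> x)"
  unfolding th_def by (auto simp: divide_simps abs_if)

lemma th_mono: assumes "x < y" shows "th x < th y"
proof (cases "0 \<le> x \<or> y < 0")
  case True
  then show ?thesis using assms
    unfolding th_def by (cases "0 \<le> x"; cases "0 \<le> y") (auto simp: divide_simps algebra_simps)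
next
  case False
  then have "th x < 0" "0 \<le> th y" using th_sign[of x] th_sign[of y] by auto
  then show ?thesis by simp
qed

lemma thi_mono: "\<bar>u\<bar> < 1 \<Longrightarrow> \<bar>v\<bar> < 1 \<Longrightarrow> u < v \<Longrightarrow> thi u < thi v"
  by (metis th_thi th_mono not_less_iff_gr_or_eq)

lemma th_cont: "continuous_on A th"
  unfolding th_def by (intro continuous_intros) (auto simp: abs_if add_nonneg_nonneg)

lemma thi_cont: "continuous_on {-1<..<1} thi"
  unfolding thi_def by (intro continuous_intros) auto


definition G :: "real \<Rightarrow> real \<Rightarrow> real" where
  "G s t = (if t = 0 then (if 0 \<le> s then s else 3) else max s (min 3 (- s / t)))"
definition Kh :: "real set \<Rightarrow> real set" where "Kh U = {-1..1} - th ` U"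
definition Dm where "Dm U u t = Inf ((\<lambda>k. G (u - k) t) ` Kh U)"
definition Dp where "Dp U u t = Inf ((\<lambda>k. G (k - u) t) ` Kh U)"
definition gh where "gh U u t = u - (Dm U u t - Dp U u t) / 4"

lemma G_nonneg: assumes "0 \<le> t" shows "0 \<le> G s t"
proof (cases "t = 0")
  case False
  then have t: "0 < t" using assms by simp
  have "0 \<le> max s (min 3 (-s/t))"
  proof (cases "0 \<le> s")
    case False then have "0 \<le> -s/t" using t divide_nonpos_pos[of s t] by simp
    then show ?thesis by simp
  qed simp
  then show ?thesis using False unfolding G_def by simp
qed (simp add: G_def)

lemma G_shift: assumes d: "0 \<le> d" and "0 \<le> t" shows "G (s+d) t \<le> G s t + d"
proof (cases "t = 0")
  case False
  then have t: "0 < t" using assms by simp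
  have a: "-(s+d)/t \<le> -s/t" using t d divide_right_mono[of "-(s+d)" "-s" t] by simp
  have b: "min 3 (-(s+d)/t) \<le> min 3 (-s/t)" using a by (simp add: min_def)
  have c: "min 3 (-s/t) \<le> max s (min 3 (-s/t))" "s \<le> max s (min 3 (-s/t))" by simp_all
  have "max (s+d) (min 3 (-(s+d)/t)) \<le> max s (min 3 (-s/t)) + d"
    unfolding max.bounded_iff using b c d by linarith
  then show ?thesis using False unfolding G_def by simp
next
  case True
  then show ?thesis using d unfolding G_def by auto
qed

lemma G_1: "\<bar>s\<bar> \<le> 3 \<Longrightarrow> G s 1 = \<bar>s\<bar>"
  unfolding G_def by auto

lemma G_0: "G 0 t = 0"
  unfolding G_def by auto

lemma Kh_sub: "Kh U \<subseteq> {-1..1}" unfolding Kh_def by auto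

lemma Kh_pm1: "-1 \<in> Kh U" "1 \<in> Kh U"
  unfolding Kh_def using th_bound by (auto simp: abs_less_iff) (metis less_irrefl)+

lemma th_image_open: "open U \<Longrightarrow> open (th ` U)"
proof -
  assume U: "open U"
  have "th ` U = {-1<..<1} \<inter> thi -` U"
    using th_bound th_thi by (force simp: abs_less_iff image_iff)
  moreover have "open ({-1<..<1} \<inter> thi -` U)"
    by (rule continuous_open_preimage[OF thi_cont]) (use U in auto)
  ultimately show ?thesis by simp
qed

lemma Kh_closed: "open U \<Longrightarrow> closed (Kh U)"
  unfolding Kh_def using th_image_open by (simp add: closed_Diff)

lemma Kh_ne: "Kh U \<noteq> {}" using Kh_pm1 by auto

lemma bdd_G: "0 \<le> t \<Longrightarrow> bdd_below ((\<lambda>k. G (f k) t) ` A)"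
  by (rule bdd_belowI[where m=0]) (auto simp: G_nonneg)

lemma Dm_nonneg: "0 \<le> t \<Longrightarrow> 0 \<le> Dm U u t"
  unfolding Dm_def by (rule cInf_greatest) (auto simp: Kh_ne G_nonneg)
lemma Dp_nonneg: "0 \<le> t \<Longrightarrow> 0 \<le> Dp U u t"
  unfolding Dp_def by (rule cInf_greatest) (auto simp: Kh_ne G_nonneg)

lemma Dm_shift: assumes "0 \<le> d" "0 \<le> t" shows "Dm U (u + d) t \<le> Dm U u t + d"
proof -
  have "Dm U (u + d) t - d \<le> Dm U u t"
    unfolding Dm_def
  proof (rule cInf_greatest)
    show "(\<lambda>k. G (u - k) t) ` Kh U \<noteq> {}" using Kh_ne by auto
    fix x assume "x \<in> (\<lambda>k. G (u - k) t) ` Kh U"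
    then obtain k where k: "k \<in> Kh U" "x = G (u - k) t" by auto
    have "Inf ((\<lambda>k. G (u + d - k) t) ` Kh U) \<le> G (u + d - k) t"
      by (rule cInf_lower) (use k bdd_G[OF assms(2)] in auto)
    also have "\<dots> \<le> G (u - k) t + d" using G_shift[OF assms, of "u-k"] by (simp add: algebra_simps)
    finally show "Inf ((\<lambda>k. G (u + d - k) t) ` Kh U) - d \<le> x" using k by simp
  qed
  thus ?thesis by simp
qed

lemma Dp_shift: assumes "0 \<le> d" "0 \<le> t" shows "Dp U u t \<le> Dp U (u + d) t + d"
proof -
  have "Dp U u t - d \<le> Dp U (u+d) t"
    unfolding Dp_def
  proof (rule cInf_greatest)
    show "(\<lambda>k. G (k - (u+d)) t) ` Kh U \<noteq> {}" using Kh_ne by auto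
    fix x assume "x \<in> (\<lambda>k. G (k - (u+d)) t) ` Kh U"
    then obtain k where k: "k \<in> Kh U" "x = G (k - (u+d)) t" by auto
    have "Inf ((\<lambda>k. G (k - u) t) ` Kh U) \<le> G (k - u) t"
      by (rule cInf_lower) (use k bdd_G[OF assms(2)] in auto)
    also have "\<dots> \<le> G (k - (u+d)) t + d" using G_shift[OF assms, of "k-(u+d)"] by (simp add: algebra_simps)
    finally show "Inf ((\<lambda>k. G (k - u) t) ` Kh U) - d \<le> x" using k by simp
  qed
  thus ?thesis by simp
qed

lemma gh_strict: assumes "u < v" "0 \<le> t" shows "gh U u t < gh U v t"
proof -
  define d where "d = v - u"
  have d: "0 < d" "v = u + d" using assms d_def by auto
  have "Dm U v t \<le> Dm U u t + d" "Dp U u t \<le> Dp U v t + d"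
    using Dm_shift[of d t U u] Dp_shift[of d t U u] d assms by auto
  thus ?thesis unfolding gh_def d(2) using d(1) by (simp add: field_simps)
qed

lemma gh_at1: assumes "\<bar>u\<bar> \<le> 2" shows "gh U u 1 = u"
proof -
  have "(\<lambda>k. G (u - k) 1) ` Kh U = (\<lambda>k. G (k - u) 1) ` Kh U"
  proof (rule image_cong[OF refl])
    fix k assume "k \<in> Kh U"
    then have "k \<in> {-1..1}" using Kh_sub by blast
    then have "\<bar>u - k\<bar> \<le> 3" using assms by (auto simp: abs_le_iff)
    then show "G (u - k) 1 = G (k - u) 1" using G_1[of "u-k"] G_1[of "k-u"] by (simp add: abs_minus_commute)
  qed
  then show ?thesis unfolding gh_def Dm_def Dp_def by simp
qed

lemma gh_pm1: assumes "0 \<le> t" shows "gh U 1 t = 1" "gh U (-1) t = -1"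
proof -
  have h1: "Dm U 1 t = 0" unfolding Dm_def
    by (rule cInf_eq_minimum) (use Kh_pm1 G_0 G_nonneg assms in \<open>force+\<close>)
  have h2: "Dp U 1 t = 0" unfolding Dp_def
    by (rule cInf_eq_minimum) (use Kh_pm1 G_0 G_nonneg assms in \<open>force+\<close>)
  have h3: "Dm U (-1) t = 0" unfolding Dm_def
    by (rule cInf_eq_minimum) (use Kh_pm1 G_0 G_nonneg assms in \<open>force+\<close>)
  have h4: "Dp U (-1) t = 0" unfolding Dp_def
    by (rule cInf_eq_minimum) (use Kh_pm1 G_0 G_nonneg assms in \<open>force+\<close>)
  show "gh U 1 t = 1" "gh U (-1) t = -1" using h1 h2 h3 h4 unfolding gh_def by simp_all
qed


lemma abs_h: "\<bar>a - b\<bar> < (c::real) \<Longrightarrow> a \<le> b + c" "\<bar>a - b\<bar> < (c::real) \<Longrightarrow> b \<le> a + c"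
  by auto

lemma Inf_le_shift:
  fixes f g :: "'a \<Rightarrow> real"
  assumes "A \<noteq> {}" "bdd_below (f ` A)" "\<And>k. k \<in> A \<Longrightarrow> f k \<le> g k + c"
  shows "Inf (f ` A) \<le> Inf (g ` A) + c"
proof -
  have "Inf (f ` A) - c \<le> Inf (g ` A)"
  proof (rule cInf_greatest)
    show "g ` A \<noteq> {}" using assms by auto
    fix x assume "x \<in> g ` A"
    then obtain k where k: "k \<in> A" "x = g k" by auto
    have "Inf (f ` A) \<le> f k" by (rule cInf_lower) (use k assms in auto)
    then show "Inf (f ` A) - c \<le> x" using k assms(3)[of k] by simp
  qed
  then show ?thesis by simp
qed

lemma G_cont: "continuous_on {z. 0 < snd z} (\<lambda>z. G (fst z) (snd z))"
proof -
  have "continuous_on {z. 0 < snd z} (\<lambda>z::real\<times>real. max (fst z) (min 3 (- fst z / snd z)))"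
    by (intro continuous_intros) auto
  then show ?thesis by (rule continuous_on_eq) (auto simp: G_def)
qed

lemma Dgen_cont:
  assumes K: "K \<subseteq> {-1..1}" "K \<noteq> {}" and sg: "\<bar>\<sigma>\<bar> = 1"
  shows "continuous_on {z. 0 < snd z} (\<lambda>z. Inf ((\<lambda>k. G (\<sigma>*(fst z - k)) (snd z)) ` K))"
  unfolding continuous_on_iff
proof (intro ballI allI impI)
  fix z0 :: "real \<times> real" and e :: real
  assume z0: "z0 \<in> {z. 0 < snd z}" and e: "0 < e"
  obtain u0 t0 where zz: "z0 = (u0, t0)" by (cases z0)
  have t0: "0 < t0" using z0 zz by simp
  define C where "C = cball (0::real) (\<bar>u0\<bar> + 3) \<times> {t0/2 .. t0+1}"
  have "compact C" unfolding C_def by (intro compact_Times) auto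
  moreover have "continuous_on C (\<lambda>z. G (fst z) (snd z))"
    by (rule continuous_on_subset[OF G_cont]) (use t0 in \<open>auto simp: C_def\<close>)
  ultimately have "uniformly_continuous_on C (\<lambda>z. G (fst z) (snd z))"
    by (rule compact_uniformly_continuous[rotated])
  then obtain d1 where d1: "d1 > 0" "\<And>x x'. x \<in> C \<Longrightarrow> x' \<in> C \<Longrightarrow> dist x' x < d1 \<Longrightarrow>
      dist (G (fst x') (snd x')) (G (fst x) (snd x)) < e/2"
    unfolding uniformly_continuous_on_def using e by (meson half_gt_zero)
  define d where "d = min d1 (min 1 (t0/2))"
  show "\<exists>d>0. \<forall>x'\<in>{z. 0 < snd z}. dist x' z0 < d \<longrightarrow>
     dist (Inf ((\<lambda>k. G (\<sigma> * (fst x' - k)) (snd x')) ` K)) (Inf ((\<lambda>k. G (\<sigma> * (fst z0 - k)) (snd z0)) ` K)) < e"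
  proof (intro exI conjI ballI impI)
    show "d > 0" using d1 t0 by (simp add: d_def)
    fix z assume z: "z \<in> {z. 0 < snd z}" "dist z z0 < d"
    obtain u t where zu: "z = (u, t)" by (cases z)
    have du: "\<bar>u - u0\<bar> < d" and dt: "\<bar>t - t0\<bar> < d"
      using z(2) zu zz dist_fst_le[of z z0] dist_snd_le[of z z0] by (auto simp: dist_real_def)
    have close: "\<bar>G (\<sigma>*(u - k)) t - G (\<sigma>*(u0 - k)) t0\<bar> < e/2" if k: "k \<in> K" for k
    proof -
      have kk: "-1 \<le> k" "k \<le> 1" using K k by auto
      have s1: "\<bar>\<sigma>*(u - k)\<bar> = \<bar>u - k\<bar>" "\<bar>\<sigma>*(u0 - k)\<bar> = \<bar>u0 - k\<bar>" using sg by (simp_all add: abs_mult)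
      have in1: "(\<sigma>*(u0 - k), t0) \<in> C" using kk t0 s1 by (auto simp: C_def)
      have dd: "d \<le> t0/2" "d \<le> 1" by (auto simp: d_def)
      have tt: "t0/2 \<le> t" "t \<le> t0+1" "\<bar>u - k\<bar> \<le> \<bar>u0\<bar> + 3"
        using dd du dt kk by (auto simp: abs_less_iff abs_le_iff)
      have in2: "(\<sigma>*(u - k), t) \<in> C" using tt s1 unfolding C_def by auto
      have "dist (\<sigma>*(u - k), t) (\<sigma>*(u0 - k), t0) = dist (u,t) (u0,t0)"
        using sg by (simp add: dist_Pair_Pair dist_real_def right_diff_distrib[symmetric] abs_mult)
      also have "\<dots> < d1" using z(2) zu zz d_def by simp
      finally have "dist (G (\<sigma>*(u - k)) t) (G (\<sigma>*(u0 - k)) t0) < e/2"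
        using d1(2)[OF in1 in2] by simp
      then show ?thesis by (simp add: dist_real_def)
    qed
    have tpos: "0 \<le> t" "0 \<le> t0" using z zu t0 by auto
    have "Inf ((\<lambda>k. G (\<sigma>*(u - k)) t) ` K) \<le> Inf ((\<lambda>k. G (\<sigma>*(u0 - k)) t0) ` K) + e/2"
      by (rule Inf_le_shift[OF K(2) bdd_G[OF tpos(1)]]) (rule abs_h(1)[OF close])
    moreover have "Inf ((\<lambda>k. G (\<sigma>*(u0 - k)) t0) ` K) \<le> Inf ((\<lambda>k. G (\<sigma>*(u - k)) t) ` K) + e/2"
      by (rule Inf_le_shift[OF K(2) bdd_G[OF tpos(2)]]) (rule abs_h(2)[OF close])
    ultimately show "dist (Inf ((\<lambda>k. G (\<sigma> * (fst z - k)) (snd z)) ` K)) (Inf ((\<lambda>k. G (\<sigma> * (fst z0 - k)) (snd z0)) ` K)) < e"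
      using zu zz e by (simp add: dist_real_def abs_less_iff)
  qed
qed

lemma gh_cont_pos: "continuous_on {z. 0 < snd z} (\<lambda>z. gh U (fst z) (snd z))"
proof -
  have 1: "continuous_on {z. 0 < snd z} (\<lambda>z. Inf ((\<lambda>k. G (1*(fst z - k)) (snd z)) ` Kh U))"
    by (rule Dgen_cont) (use Kh_sub Kh_ne in auto)
  have 2: "continuous_on {z. 0 < snd z} (\<lambda>z. Inf ((\<lambda>k. G ((-1)*(fst z - k)) (snd z)) ` Kh U))"
    by (rule Dgen_cont) (use Kh_sub Kh_ne in auto)
  have "continuous_on {z. 0 < snd z} (\<lambda>z. fst z - (Inf ((\<lambda>k. G (1*(fst z - k)) (snd z)) ` Kh U)
      - Inf ((\<lambda>k. G ((-1)*(fst z - k)) (snd z)) ` Kh U)) / 4)"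
    by (intro continuous_intros 1 2) auto
  then show ?thesis unfolding gh_def Dm_def Dp_def by simp
qed


definition aa where "aa U u = Sup {k \<in> Kh U. k \<le> u}"
definition bb where "bb U u = Inf {k \<in> Kh U. u \<le> k}"

lemma th_U_bound: "u \<in> th ` U \<Longrightarrow> -1 < u \<and> u < 1"
  using th_bound by (auto simp: abs_less_iff)

lemma ab_props:
  assumes U: "open U" and u: "u \<in> th ` U"
  shows "aa U u \<in> Kh U" "bb U u \<in> Kh U" "aa U u < u" "u < bb U u"
    "\<And>k. k \<in> Kh U \<Longrightarrow> k \<le> aa U u \<or> bb U u \<le> k" "-1 \<le> aa U u" "bb U u \<le> 1"
proof -
  have u1: "-1 < u" "u < 1" using th_U_bound[OF u] by auto
  have uK: "u \<notin> Kh U" using u by (simp add: Kh_def)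
  have ne1: "{k \<in> Kh U. k \<le> u} \<noteq> {}" using Kh_pm1(1)[of U] u1 by force
  have ne2: "{k \<in> Kh U. u \<le> k} \<noteq> {}" using Kh_pm1(2)[of U] u1 by force
  have cl1: "closed {k \<in> Kh U. k \<le> u}"
  proof -
    have "{k \<in> Kh U. k \<le> u} = Kh U \<inter> {..u}" by auto
    then show ?thesis using Kh_closed[OF U] by (simp add: closed_Int)
  qed
  have cl2: "closed {k \<in> Kh U. u \<le> k}"
  proof -
    have "{k \<in> Kh U. u \<le> k} = Kh U \<inter> {u..}" by auto
    then show ?thesis using Kh_closed[OF U] by (simp add: closed_Int)
  qed
  have b1: "bdd_above {k \<in> Kh U. k \<le> u}" by (rule bdd_aboveI[where M=u]) auto
  have b2: "bdd_below {k \<in> Kh U. u \<le> k}" by (rule bdd_belowI[where m=u]) auto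
  have A: "aa U u \<in> {k \<in> Kh U. k \<le> u}" unfolding aa_def by (rule closed_contains_Sup[OF ne1 b1 cl1])
  have B: "bb U u \<in> {k \<in> Kh U. u \<le> k}" unfolding bb_def by (rule closed_contains_Inf[OF ne2 b2 cl2])
  show "aa U u \<in> Kh U" "bb U u \<in> Kh U" using A B by auto
  show "aa U u < u" "u < bb U u" using A B uK by (auto simp: order.order_iff_strict)
  show "k \<le> aa U u \<or> bb U u \<le> k" if "k \<in> Kh U" for k
  proof (cases "k \<le> u")
    case True then show ?thesis unfolding aa_def using that b1 by (auto intro: cSup_upper)
  next
    case False then show ?thesis unfolding bb_def using that b2 by (auto intro: cInf_lower)
  qed
  show "-1 \<le> aa U u" unfolding aa_def using Kh_pm1(1) u1 b1 by (auto intro: cSup_upper)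
  show "bb U u \<le> 1" unfolding bb_def using Kh_pm1(2) u1 b2 by (auto intro: cInf_lower)
qed

lemma G_pos: assumes "0 \<le> s" "0 \<le> t" shows "G s t = s"
proof (cases "t = 0")
  case False
  have "0 \<le> s/t" using assms by simp
  then have "-(s/t) \<le> s" using assms(1) by linarith
  then have "min 3 (-s/t) \<le> s" by (simp add: min_le_iff_disj)
  then have "max s (min 3 (-s/t)) = s" by (simp add: max_absorb1)
  then show ?thesis using False by (simp add: G_def)
qed (use assms in \<open>simp add: G_def\<close>)

lemma G_neg: assumes "s < 0" "t = 0 \<or> (0 < t \<and> 3*t \<le> -s)" shows "G s t = 3"
  using assms(2)
proof
  assume "t = 0" then show ?thesis using assms by (simp add: G_def)
next
  assume t: "0 < t \<and> 3*t \<le> -s"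
  then have "3 \<le> -s/t" by (simp add: divide_simps)
  then have "min 3 (-s/t) = 3" by simp
  then show ?thesis using t assms(1) by (simp add: G_def)
qed

lemma D_local:
  assumes ab: "a \<in> Kh U" "b \<in> Kh U" "\<And>k. k \<in> Kh U \<Longrightarrow> k \<le> a \<or> b \<le> k" "a < u" "u < b" "-1 \<le> a" "b \<le> 1"
    and t: "0 \<le> t" "t = 0 \<or> 3*t \<le> min (u - a) (b - u)"
  shows "Dm U u t = u - a" "Dp U u t = b - u" "gh U u t = u/2 + (a+b)/4"
proof -
  have tt: "\<And>s. s < 0 \<Longrightarrow> -s \<ge> min (u - a) (b - u) \<Longrightarrow> G s t = 3"
    by (rule G_neg) (use t in auto)
  show 1: "Dm U u t = u - a" unfolding Dm_def
  proof (rule cInf_eq_minimum)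
    show "u - a \<in> (\<lambda>k. G (u - k) t) ` Kh U" using ab t G_pos[of "u-a" t] by force
    fix x assume "x \<in> (\<lambda>k. G (u - k) t) ` Kh U"
    then obtain k where k: "k \<in> Kh U" "x = G (u - k) t" by auto
    show "u - a \<le> x"
    proof (cases "k \<le> a")
      case True then show ?thesis using k ab t G_pos[of "u-k" t] by auto
    next
      case False then have "b \<le> k" using ab k by auto
      then have "G (u - k) t = 3" using ab by (intro tt) auto
      then show ?thesis using k ab by auto
    qed
  qed
  show 2: "Dp U u t = b - u" unfolding Dp_def
  proof (rule cInf_eq_minimum)
    show "b - u \<in> (\<lambda>k. G (k - u) t) ` Kh U" using ab t G_pos[of "b-u" t] by force
    fix x assume "x \<in> (\<lambda>k. G (k - u) t) ` Kh U"
    then obtain k where k: "k \<in> Kh U" "x = G (k - u) t" by auto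
    show "b - u \<le> x"
    proof (cases "b \<le> k")
      case True then show ?thesis using k ab t G_pos[of "k-u" t] by auto
    next
      case False then have "k \<le> a" using ab k by auto
      then have "G (k - u) t = 3" using ab by (intro tt) auto
      then show ?thesis using k ab by auto
    qed
  qed
  show "gh U u t = u/2 + (a+b)/4" unfolding gh_def 1 2 by (simp add: field_simps)
qed

definition Reg where "Reg U = {z. 0 < snd z} \<union> (th ` U \<times> {0})"

lemma gh_cont: assumes U: "open U" shows "continuous_on (Reg U) (\<lambda>z. gh U (fst z) (snd z))"
  unfolding continuous_on_iff
proof (intro ballI allI impI)
  fix z0 :: "real \<times> real" and e :: real
  assume z0: "z0 \<in> Reg U" and e: "0 < e"
  obtain u0 t0 where zz: "z0 = (u0, t0)" by (cases z0)
  show "\<exists>d>0. \<forall>x'\<in>Reg U. dist x' z0 < d \<longrightarrow> dist (gh U (fst x') (snd x')) (gh U (fst z0) (snd z0)) < e"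
  proof (cases "0 < t0")
    case True
    from gh_cont_pos[of U] z0 True e zz obtain d where d: "d > 0"
      "\<forall>x'\<in>{z. 0 < snd z}. dist x' z0 < d \<longrightarrow> dist (gh U (fst x') (snd x')) (gh U (fst z0) (snd z0)) < e"
      unfolding continuous_on_iff by (metis mem_Collect_eq snd_conv)
    show ?thesis
    proof (intro exI conjI ballI impI)
      show "0 < min d t0" using d True by simp
      fix z assume z: "z \<in> Reg U" "dist z z0 < min d t0"
      have "\<bar>snd z - t0\<bar> < t0" using z(2) dist_snd_le[of z z0] zz by (simp add: dist_real_def)
      then have "0 < snd z" by (auto simp: abs_less_iff)
      then show "dist (gh U (fst z) (snd z)) (gh U (fst z0) (snd z0)) < e" using d z by auto
    qed
  next
    case False
    then have t0: "t0 = 0" and u0: "u0 \<in> th ` U" using z0 zz by (auto simp: Reg_def)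
    note P = ab_props[OF U u0]
    define a where "a = aa U u0"
    define b where "b = bb U u0"
    define r where "r = min (u0 - a) (b - u0)"
    have r: "0 < r" using P by (simp add: r_def a_def b_def)
    have g0: "gh U u0 0 = u0/2 + (a+b)/4"
      by (rule D_local(3)) (use P in \<open>auto simp: a_def b_def\<close>)
    show ?thesis
    proof (intro exI conjI ballI impI)
      show "0 < min (r/6) e" using r e by simp
      fix z assume z: "z \<in> Reg U" "dist z z0 < min (r/6) e"
      obtain u t where zu: "z = (u, t)" by (cases z)
      have du: "\<bar>u - u0\<bar> < min (r/6) e" and dt: "\<bar>t\<bar> < r/6"
        using z(2) zu zz t0 dist_fst_le[of z z0] dist_snd_le[of z z0] by (auto simp: dist_real_def)
      have tnn: "0 \<le> t" using z(1) zu by (auto simp: Reg_def)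
      have r1: "r \<le> u0 - a" "r \<le> b - u0" by (simp_all add: r_def)
      have du': "\<bar>u - u0\<bar> < r/6" "\<bar>t\<bar> < r/6" using du dt by auto
      have uu: "u0 - r/6 < u" "u < u0 + r/6" "t < r/6"
        using du'(1)[unfolded abs_less_iff] du'(2)[unfolded abs_less_iff] by linarith+
      have ct: "a < u" "u < b" "3*t \<le> u - a" "3*t \<le> b - u" using r1 uu tnn r by linarith+
      have "gh U u t = u/2 + (a+b)/4"
        by (rule D_local(3)) (use P ct tnn in \<open>auto simp: a_def b_def\<close>)
      then show "dist (gh U (fst z) (snd z)) (gh U (fst z0) (snd z0)) < e"
        using g0 zu zz t0 du by (simp add: dist_real_def abs_less_iff)
    qed
  qed
qed


lemma dist_pair_le: "dist (a::real, b::real) (c, d) \<le> \<bar>a - c\<bar> + \<bar>b - d\<bar>"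
  unfolding dist_Pair_Pair dist_real_def using sqrt_sum_squares_le_sum_abs by simp

lemma inv_cont:
  fixes phi :: "real \<times> real \<Rightarrow> real"
  assumes cont: "continuous_on S phi"
    and mono: "\<And>a b y. (a, y) \<in> S \<Longrightarrow> (b, y) \<in> S \<Longrightarrow> a < b \<Longrightarrow> phi (a, y) < phi (b, y)"
    and loc: "\<And>x0 y0. (x0, y0) \<in> S \<Longrightarrow> \<exists>r>0. \<forall>x y x'. \<bar>x - x0\<bar> \<le> r \<longrightarrow> \<bar>y - y0\<bar> < r \<longrightarrow> (x', y) \<in> S \<longrightarrow> (x, y) \<in> S"
    and hdef: "h = (\<lambda>p. (phi p, snd p))"
  shows "continuous_on (h ` S) (inv_into S h)"
proof -
  have monole: "phi (b, y) \<le> phi (a, y) \<Longrightarrow> (a, y) \<in> S \<Longrightarrow> (b, y) \<in> S \<Longrightarrow> b \<le> a" for a b y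
    using mono[of a y b] by (meson not_le)
  have inj: "inj_on h S"
  proof (rule inj_onI)
    fix p q assume pq: "p \<in> S" "q \<in> S" "h p = h q"
    obtain a y where p: "p = (a, y)" by (cases p)
    obtain b y' where q: "q = (b, y')" by (cases q)
    have yy: "y' = y" and ph: "phi (a, y) = phi (b, y)" using pq p q hdef by auto
    have "a \<le> b" "b \<le> a" using monole[of a y b] monole[of b y a] ph pq p q yy by auto
    then show "p = q" using p q yy by simp
  qed
  show ?thesis
    unfolding continuous_on_iff
  proof (intro ballI allI impI)
    fix q0 e assume q0: "q0 \<in> h ` S" and e: "(0::real) < e"
    then obtain p0 where p0: "p0 \<in> S" "q0 = h p0" by auto
    obtain x0 y0 where pp: "p0 = (x0, y0)" by (cases p0)
    from loc[of x0 y0] p0 pp obtain r where r: "r > 0"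
      "\<And>x y x'. \<bar>x - x0\<bar> \<le> r \<Longrightarrow> \<bar>y - y0\<bar> < r \<Longrightarrow> (x', y) \<in> S \<Longrightarrow> (x, y) \<in> S" by blast
    define e' where "e' = min r (e/3)"
    have e': "0 < e'" "e' \<le> r" "e' < e/2" using r e by (auto simp: e'_def)
    have Sm: "(x0 - e', y0) \<in> S" and Sp: "(x0 + e', y0) \<in> S"
      using r(2)[of "x0 - e'" y0 x0] r(2)[of "x0 + e'" y0 x0] p0 pp e' by auto
    have g1: "phi (x0 - e', y0) < phi (x0, y0)" "phi (x0, y0) < phi (x0 + e', y0)"
      using mono Sm Sp p0 pp e' by auto
    define \<gamma> where "\<gamma> = min (phi (x0, y0) - phi (x0 - e', y0)) (phi (x0 + e', y0) - phi (x0, y0)) / 2"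
    have \<gamma>: "0 < \<gamma>" using g1 by (simp add: \<gamma>_def)
    from cont Sm \<gamma> obtain \<eta>1 where \<eta>1: "\<eta>1 > 0"
      "\<And>p. p \<in> S \<Longrightarrow> dist p (x0 - e', y0) < \<eta>1 \<Longrightarrow> dist (phi p) (phi (x0 - e', y0)) < \<gamma>"
      unfolding continuous_on_iff by metis
    from cont Sp \<gamma> obtain \<eta>2 where \<eta>2: "\<eta>2 > 0"
      "\<And>p. p \<in> S \<Longrightarrow> dist p (x0 + e', y0) < \<eta>2 \<Longrightarrow> dist (phi p) (phi (x0 + e', y0)) < \<gamma>"
      unfolding continuous_on_iff by metis
    define d where "d = min (min \<gamma> r) (min (min \<eta>1 \<eta>2) (e/2))"
    show "\<exists>d>0. \<forall>q\<in>h ` S. dist q q0 < d \<longrightarrow> dist (inv_into S h q) (inv_into S h q0) < e"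
    proof (intro exI conjI ballI impI)
      show "0 < d" using \<gamma> r \<eta>1 \<eta>2 e by (simp add: d_def)
      fix q assume q: "q \<in> h ` S" "dist q q0 < d"
      then obtain p where p: "p \<in> S" "q = h p" by auto
      obtain x y where xy: "p = (x, y)" by (cases p)
      have iq: "inv_into S h q = p" "inv_into S h q0 = p0" using inj p p0 by auto
      have dy: "\<bar>y - y0\<bar> < d" and dph: "\<bar>phi (x, y) - phi (x0, y0)\<bar> < d"
        using q(2) p xy p0 pp hdef dist_fst_le[of q q0] dist_snd_le[of q q0] by (auto simp: dist_real_def)
      have dd: "d \<le> \<gamma>" "d \<le> r" "d \<le> \<eta>1" "d \<le> \<eta>2" "d \<le> e/2" by (auto simp: d_def)
      have Sm': "(x0 - e', y) \<in> S" and Sp': "(x0 + e', y) \<in> S"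
        using r(2)[of "x0 - e'" y x] r(2)[of "x0 + e'" y x] p xy e' dy dd by auto
      have "dist (x0 - e', y) (x0 - e', y0) < \<eta>1" "dist (x0 + e', y) (x0 + e', y0) < \<eta>2"
        using dy dd by (simp_all add: dist_Pair_Pair dist_real_def)
      then have c1: "\<bar>phi (x0 - e', y) - phi (x0 - e', y0)\<bar> < \<gamma>" and c2: "\<bar>phi (x0 + e', y) - phi (x0 + e', y0)\<bar> < \<gamma>"
        using \<eta>1(2)[OF Sm'] \<eta>2(2)[OF Sp'] by (auto simp: dist_real_def)
      have gg: "2*\<gamma> \<le> phi (x0, y0) - phi (x0 - e', y0)" "2*\<gamma> \<le> phi (x0 + e', y0) - phi (x0, y0)"
        by (auto simp: \<gamma>_def)
      have "phi (x0 - e', y) < phi (x, y)" "phi (x, y) < phi (x0 + e', y)"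
        using c1 c2 gg dph dd by (auto simp: abs_less_iff)
      then have "x0 - e' \<le> x" "x \<le> x0 + e'"
        using monole[where a=x and b="x0 - e'" and y=y] monole[where a="x0 + e'" and b=x and y=y] Sm' Sp' p xy by auto
      then have "\<bar>x - x0\<bar> \<le> e'" by auto
      then have "\<bar>x - x0\<bar> + \<bar>y - y0\<bar> < e" using e' dy dd by linarith
      then show "dist (inv_into S h q) (inv_into S h q0) < e"
        unfolding iq xy pp using dist_pair_le[of x y x0 y0] by linarith
    qed
  qed
qed


definition phi where "phi U p = thi (gh U (th (fst p)) (1 - snd p))"
definition PP where "PP U x = thi ((3 * aa U (th x) + bb U (th x)) / 4)"
definition QQ where "QQ U x = thi ((aa U (th x) + 3 * bb U (th x)) / 4)"

lemma thi_mono_le: "\<bar>u\<bar> < 1 \<Longrightarrow> \<bar>v\<bar> < 1 \<Longrightarrow> u \<le> v \<Longrightarrow> thi u \<le> thi v"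
  using thi_mono by (cases "u = v") (auto simp: order.order_iff_strict)

lemma th_mono_le: "x \<le> y \<Longrightarrow> th x \<le> th y"
  using th_mono by (cases "x = y") (auto simp: order.order_iff_strict)

lemma th_inj: "th x = th y \<Longrightarrow> x = y"
  by (metis thi_th)

lemma th_in_iff: "th x \<in> th ` U \<longleftrightarrow> x \<in> U"
  using th_inj by auto

lemma gh_top: assumes "open U" "u \<in> th ` U" shows "gh U u 0 = u/2 + (aa U u + bb U u)/4"
  by (rule D_local(3)) (use ab_props[OF assms] in auto)

lemma gh_bound:
  assumes U: "open U" and t: "0 \<le> t" and c: "(0 < t \<and> \<bar>u\<bar> < 1) \<or> (t = 0 \<and> u \<in> th ` U)"
  shows "\<bar>gh U u t\<bar> < 1"
  using c
proof
  assume a: "0 < t \<and> \<bar>u\<bar> < 1"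
  then have "gh U (-1) t < gh U u t" "gh U u t < gh U 1 t" using gh_strict[of _ _ t U] t by (auto simp: abs_less_iff)
  then show ?thesis using gh_pm1[OF t, of U] by (auto simp: abs_less_iff)
next
  assume a: "t = 0 \<and> u \<in> th ` U"
  note P = ab_props[OF U conjunct2[OF a]]
  show ?thesis using gh_top[OF U conjunct2[OF a]] a P by (auto simp: abs_less_iff field_simps)
qed

lemma same_ab:
  assumes U: "open U" and x: "x \<in> U" "x' \<in> U" and seg: "{min x x'..max x x'} \<subseteq> U"
  shows "aa U (th x') = aa U (th x)" "bb U (th x') = bb U (th x)"
proof -
  have key: "k \<le> th x \<longleftrightarrow> k \<le> th x'" if k: "k \<in> Kh U" for k
  proof -
    have kn: "k \<notin> th ` U" and kb: "-1 \<le> k" "k \<le> 1" using k by (auto simp: Kh_def)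
    have bx: "\<bar>th x\<bar> < 1" "\<bar>th x'\<bar> < 1" by (simp_all add: th_bound)
    have gen: False if "k \<le> th z" "\<not> k \<le> th z'" "z \<in> U" "z' \<in> U" "{min z z'..max z z'} \<subseteq> U" for z z'
    proof -
      have kk: "\<bar>k\<bar> < 1" using that(1,2) th_bound[of z] th_bound[of z'] kb by (auto simp: abs_less_iff)
      have "thi k \<le> thi (th z)" using thi_mono_le[OF kk th_bound that(1)] .
      moreover have "thi (th z') < thi k" using thi_mono[OF th_bound kk] that(2) by simp
      ultimately have "thi k \<in> {min z z'..max z z'}" by auto
      then have "thi k \<in> U" using that(5) by auto
      then have "k \<in> th ` U" using th_thi[OF kk] by (metis image_eqI)
      then show False using kn by simp
    qed
    show ?thesis
    proof
      assume "k \<le> th x" then show "k \<le> th x'" using gen[of x x'] x seg by blast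
    next
      assume "k \<le> th x'" then show "k \<le> th x" using gen[of x' x] x seg by (auto simp: min.commute max.commute)
    qed
  qed
  have n1: "th x \<notin> Kh U" "th x' \<notin> Kh U" using x by (auto simp: Kh_def)
  have "{k \<in> Kh U. k \<le> th x'} = {k \<in> Kh U. k \<le> th x}" using key by auto
  then show "aa U (th x') = aa U (th x)" by (simp add: aa_def)
  have "{k \<in> Kh U. th x' \<le> k} = {k \<in> Kh U. th x \<le> k}"
  proof -
    have "th x' \<le> k \<longleftrightarrow> th x \<le> k" if "k \<in> Kh U" for k
      using key[OF that] n1 that by (metis linorder_le_cases order_antisym)
    then show ?thesis by auto
  qed
  then show "bb U (th x') = bb U (th x)" by (simp add: bb_def)
qed

lemma L1:
  assumes U: "open U" and x: "x \<in> U" "x' \<in> U" and seg: "{min x x'..max x x'} \<subseteq> U"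
  shows "PP U x \<le> phi U (x', 1) \<and> phi U (x', 1) \<le> QQ U x"
proof -
  have u': "th x' \<in> th ` U" using x by auto
  note P = ab_props[OF U u']
  note E = same_ab[OF assms]
  define a where "a = aa U (th x)"
  define b where "b = bb U (th x)"
  have ph: "phi U (x', 1) = thi (th x'/2 + (a + b)/4)"
    unfolding phi_def using gh_top[OF U u'] E by (simp add: a_def b_def)
  have ab: "-1 \<le> a" "b \<le> 1" "a < th x'" "th x' < b" using P E by (auto simp: a_def b_def)
  show ?thesis unfolding ph PP_def QQ_def a_def[symmetric] b_def[symmetric]
    by (intro conjI thi_mono_le) (use ab in \<open>auto simp: abs_less_iff field_simps\<close>)
qed

lemma PQsub:
  assumes U: "open U" and x: "x \<in> U"
  shows "{PP U x..QQ U x} \<subseteq> U"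
proof
  fix z assume z: "z \<in> {PP U x..QQ U x}"
  have u: "th x \<in> th ` U" using x by auto
  note P = ab_props[OF U u]
  define a where "a = aa U (th x)"
  define b where "b = bb U (th x)"
  have ab: "-1 \<le> a" "b \<le> 1" "a < b" using P by (auto simp: a_def b_def)
  have b1: "\<bar>(3*a+b)/4\<bar> < 1" "\<bar>(a+3*b)/4\<bar> < 1" using ab by (auto simp: abs_less_iff)
  have "th (PP U x) \<le> th z" "th z \<le> th (QQ U x)" using z th_mono_le by auto
  then have tz: "(3*a+b)/4 \<le> th z" "th z \<le> (a+3*b)/4"
    unfolding PP_def QQ_def a_def[symmetric] b_def[symmetric] using th_thi[OF b1(1)] th_thi[OF b1(2)] by auto
  have "th z \<notin> Kh U"
  proof
    assume "th z \<in> Kh U"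
    then have "th z \<le> a \<or> b \<le> th z" using P by (simp add: a_def b_def)
    then show False using tz ab by auto
  qed
  moreover have "th z \<in> {-1..1}" using th_bound[of z] by (auto simp: abs_less_iff)
  ultimately have "th z \<in> th ` U" by (simp add: Kh_def)
  then show "z \<in> U" by (simp add: th_in_iff)
qed

lemma L2:
  assumes U: "open U" and x: "x \<in> U" "x' \<in> U" and k: "k \<notin> U" "x < k" "k < x'"
  shows "QQ U x < k \<and> k < PP U x'"
proof -
  have tk: "th k \<in> Kh U" using k th_bound[of k] th_in_iff[of k U] by (auto simp: Kh_def abs_less_iff)
  have u: "th x \<in> th ` U" "th x' \<in> th ` U" using x by auto
  note P = ab_props[OF U u(1)] and P' = ab_props[OF U u(2)]
  have lt: "th x < th k" "th k < th x'" using k th_mono by auto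
  have "bb U (th x) \<le> th k" using P(5)[OF tk] P(3) lt by auto
  moreover have "th k \<le> aa U (th x')" using P'(5)[OF tk] P'(4) lt by auto
  ultimately have c: "(aa U (th x) + 3 * bb U (th x))/4 < th k" "th k < (3 * aa U (th x') + bb U (th x'))/4"
    using P P' by auto
  have b1: "\<bar>(aa U (th x) + 3 * bb U (th x))/4\<bar> < 1" "\<bar>(3 * aa U (th x') + bb U (th x'))/4\<bar> < 1"
    using P P' by (auto simp: abs_less_iff)
  show ?thesis unfolding QQ_def PP_def
    using thi_mono[OF b1(1) th_bound c(1)] thi_mono[OF th_bound b1(2) c(2)] by simp
qed


theorem mainTheorem3:
  fixes S :: "(real \<times> real) set"
  assumes "UNIV \<times> {0..<1} \<subseteq> S"
      and "S \<subseteq> UNIV \<times> {0..1}"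
      and "openin (top_of_set (UNIV \<times> {0..1})) S"
  shows "\<exists>S' h. homeomorphic_map (top_of_set S) (top_of_set S') h
     \<and> UNIV \<times> {0..<1} \<subseteq> S' \<and> S' \<subseteq> S
     \<and> (\<forall>C\<in>components (S' \<inter> (UNIV \<times> {1})). bounded (closure C))
     \<and> (\<forall>C\<in>components (S' \<inter> (UNIV \<times> {1})). \<forall>D\<in>components (S' \<inter> (UNIV \<times> {1})).
           C \<noteq> D \<longrightarrow> closure C \<inter> closure D = {})
     \<and> (\<forall>x. h (x, 0) = (x, 0))
     \<and> (\<forall>p\<in>S. snd (h p) = snd p)"
proof -
  define U where "U = {x. (x, 1::real) \<in> S}"
  obtain T0 where T0: "open T0" "S = (UNIV \<times> {0..1}) \<inter> T0"
    using assms(3) unfolding openin_open by blast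
  have Uopen: "open U"
  proof -
    have "U = (\<lambda>x. (x, 1::real)) -` T0" using T0 by (auto simp: U_def)
    moreover have "open ((\<lambda>x. (x, 1::real)) -` T0)"
      by (rule continuous_open_vimage[OF T0(1)]) (intro continuous_intros)
    ultimately show ?thesis by simp
  qed
  have Sy: "0 \<le> y \<and> y \<le> 1" if "(x, y) \<in> S" for x y using assms(2) that by auto
  have S0: "(x, y) \<in> S" if "0 \<le> y" "y < 1" for x y using assms(1) that by auto
  define f where "f = phi U"
  define h where "h = (\<lambda>p. (f p, snd p))"
  define S' where "S' = h ` S"
  have reg: "(th (fst p), 1 - snd p) \<in> Reg U" if "p \<in> S" for p
  proof -
    obtain x y where p: "p = (x, y)" by (cases p)
    show ?thesis
    proof (cases "y < 1")
      case True then show ?thesis using p by (simp add: Reg_def)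
    next
      case False then have "y = 1" using Sy that p by force
      then show ?thesis using that p by (auto simp: Reg_def U_def)
    qed
  qed
  have ghb: "\<bar>gh U (th (fst p)) (1 - snd p)\<bar> < 1" if "p \<in> S" for p
  proof (rule gh_bound[OF Uopen])
    obtain x y where p: "p = (x, y)" by (cases p)
    show "0 \<le> 1 - snd p" using Sy that p by auto
    show "(0 < 1 - snd p \<and> \<bar>th (fst p)\<bar> < 1) \<or> (1 - snd p = 0 \<and> th (fst p) \<in> th ` U)"
      using reg[OF that] th_bound by (auto simp: Reg_def)
  qed
  have fcont: "continuous_on S f"
  proof -
    have c0: "continuous_on S (\<lambda>p. (th (fst p), 1 - snd p))"
      by (intro continuous_intros continuous_on_compose2[OF th_cont]) auto
    have c1: "continuous_on S (\<lambda>p. gh U (fst (th (fst p), 1 - snd p)) (snd (th (fst p), 1 - snd p)))"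
      by (rule continuous_on_compose2[OF gh_cont[OF Uopen] c0]) (use reg in auto)
    have "continuous_on S (\<lambda>p. thi (gh U (th (fst p)) (1 - snd p)))"
      by (rule continuous_on_compose2[OF thi_cont]) (use c1 ghb in \<open>auto simp: abs_less_iff\<close>)
    then show ?thesis by (simp add: f_def phi_def[abs_def])
  qed
  have fmono: "f (a, y) < f (b, y)" if "(a, y) \<in> S" "(b, y) \<in> S" "a < b" for a b y
  proof -
    have "gh U (th a) (1 - y) < gh U (th b) (1 - y)"
      by (rule gh_strict) (use th_mono[OF that(3)] Sy[OF that(1)] in auto)
    then show ?thesis using ghb[OF that(1)] ghb[OF that(2)] unfolding f_def phi_def
      by (auto intro: thi_mono)
  qed
  have f0: "f (x, 0) = x" for x
    unfolding f_def phi_def using gh_at1[of "th x" U] th_bound[of x] by simp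
  have fU: "f (x, 1) \<in> {PP U x..QQ U x}" "f (x, 1) \<in> U" if "x \<in> U" for x
  proof -
    show "f (x, 1) \<in> {PP U x..QQ U x}" using L1[OF Uopen that that] that by (simp add: f_def)
    then show "f (x, 1) \<in> U" using PQsub[OF Uopen that] by auto
  qed
  have loc: "\<exists>r>0. \<forall>x y x'. \<bar>x - x0\<bar> \<le> r \<longrightarrow> \<bar>y - y0\<bar> < r \<longrightarrow> (x', y) \<in> S \<longrightarrow> (x, y) \<in> S"
    if "(x0, y0) \<in> S" for x0 y0
  proof (cases "y0 < 1")
    case True
    show ?thesis
    proof (intro exI conjI allI impI)
      show "0 < 1 - y0" using True by simp
      fix x y x' assume "\<bar>y - y0\<bar> < 1 - y0" "(x', y) \<in> S"
      then show "(x, y) \<in> S" using Sy[of x' y] S0[of y x] by (auto simp: abs_less_iff)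
    qed
  next
    case False
    then have y1: "y0 = 1" "x0 \<in> U" using Sy that by (force simp: U_def)+
    obtain r where r: "r > 0" "ball x0 r \<subseteq> U" using Uopen y1 open_contains_ball by blast
    show ?thesis
    proof (intro exI conjI allI impI)
      show "0 < r/2" using r by simp
      fix x y x' assume a: "\<bar>x - x0\<bar> \<le> r/2" "\<bar>y - y0\<bar> < r/2" "(x', y) \<in> S"
      show "(x, y) \<in> S"
      proof (cases "y < 1")
        case True then show ?thesis using Sy[OF a(3)] S0 by auto
      next
        case False
        then have "y = 1" using Sy[OF a(3)] by auto
        moreover have "x \<in> U" using r a(1) by (auto simp: dist_real_def abs_minus_commute)
        ultimately show ?thesis by (simp add: U_def)
      qed
    qed
  qed
  have inj: "inj_on h S"
  proof (rule inj_onI)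
    fix p q assume pq: "p \<in> S" "q \<in> S" "h p = h q"
    obtain a y where p: "p = (a, y)" by (cases p)
    obtain b y' where q: "q = (b, y')" by (cases q)
    have yy: "y' = y" and ph: "f (a, y) = f (b, y)" using pq p q h_def by auto
    have "\<not> a < b" "\<not> b < a" using fmono[of a y b] fmono[of b y a] ph pq p q yy by auto
    then show "p = q" using p q yy by simp
  qed
  have icont: "continuous_on (h ` S) (inv_into S h)"
    by (rule inv_cont[OF fcont fmono loc h_def]) auto
  have hcont: "continuous_on S h" unfolding h_def by (intro continuous_intros fcont)
  have hom: "homeomorphic_map (top_of_set S) (top_of_set S') h"
    unfolding homeomorphic_map_maps
  proof (intro exI)
    show "homeomorphic_maps (top_of_set S) (top_of_set S') h (inv_into S h)"
      unfolding homeomorphic_maps_def using hcont icont inj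
      by (auto simp: S'_def inv_into_into Pi_iff)
  qed
  have surj: "UNIV \<times> {0..<1} \<subseteq> S'"
  proof
    fix z :: "real \<times> real" assume z: "z \<in> UNIV \<times> {0..<1}"
    obtain w y where zz: "z = (w, y)" by (cases z)
    have y: "0 \<le> y" "y < 1" using z zz by auto
    define t where "t = 1 - y"
    have t: "0 < t" using y by (simp add: t_def)
    have cg: "continuous_on {-1..1} (\<lambda>u. gh U u t)"
    proof -
      have "continuous_on {-1..1} (\<lambda>u. gh U (fst (u, t)) (snd (u, t)))"
        by (rule continuous_on_compose2[OF gh_cont_pos]) (use t in \<open>auto intro!: continuous_intros\<close>)
      then show ?thesis by simp
    qed
    have v: "\<bar>th w\<bar> < 1" by (rule th_bound)
    obtain u where u: "-1 \<le> u" "u \<le> 1" "gh U u t = th w"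
      using IVT'[of "\<lambda>u. gh U u t" "-1" "th w" 1] gh_pm1[of t U] t v cg by (auto simp: abs_less_iff)
    have u1: "\<bar>u\<bar> < 1" using u gh_pm1[of t U] t v by (cases "u = 1"; cases "u = -1") (auto simp: abs_less_iff)
    have "f (thi u, y) = w" unfolding f_def phi_def using th_thi[OF u1] u(3) t_def by simp
    moreover have "(thi u, y) \<in> S" using S0 y by simp
    ultimately show "z \<in> S'" unfolding S'_def h_def zz by (metis (no_types, lifting) image_eqI fst_conv snd_conv)
  qed
  have sub: "S' \<subseteq> S"
  proof
    fix z assume "z \<in> S'"
    then obtain x y where xy: "(x, y) \<in> S" "z = (f (x, y), y)" by (auto simp: S'_def h_def)
    show "z \<in> S"
    proof (cases "y < 1")
      case True then show ?thesis using S0 Sy[OF xy(1)] xy by auto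
    next
      case False then have "y = 1" using Sy[OF xy(1)] by auto
      then show ?thesis using xy fU(2)[of x] by (auto simp: U_def)
    qed
  qed
  define T where "T = S' \<inter> (UNIV \<times> {1})"
  have Tchar: "z \<in> T \<longleftrightarrow> (\<exists>x\<in>U. z = (f (x, 1), 1))" for z
    unfolding T_def S'_def h_def U_def by force
  have segU: "{min x x'..max x x'} \<subseteq> U"
    if E: "connected E" "E \<subseteq> T" "(f (x, 1), 1) \<in> E" "(f (x', 1), 1) \<in> E" and xx: "x \<in> U" "x' \<in> U" for E x x'
  proof (rule ccontr)
    assume "\<not> {min x x'..max x x'} \<subseteq> U"
    then obtain k where k: "k \<in> {min x x'..max x x'}" "k \<notin> U" by blast
    have ce: "connected (fst ` E)" by (rule connected_continuous_image[OF _ E(1)]) (intro continuous_intros)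
    have between: "f (x, 1) < k \<and> k < f (x', 1) \<or> f (x', 1) < k \<and> k < f (x, 1)"
    proof (cases "x < x'")
      case True
      then have "x < k" "k < x'" using k xx by (auto simp: min_def max_def order.order_iff_strict)
      then show ?thesis using L2[OF Uopen xx k(2)] fU(1)[OF xx(1)] fU(1)[OF xx(2)] by auto
    next
      case False
      then have mm: "min x x' = x'" "max x x' = x" by auto
      then have "x' \<le> k" "k \<le> x" "k \<noteq> x'" "k \<noteq> x" using k xx by auto
      then have "x' < k" "k < x" by auto
      then show ?thesis using L2[OF Uopen xx(2) xx(1) k(2)] fU(1)[OF xx(1)] fU(1)[OF xx(2)] by auto
    qed
    have "k \<in> fst ` E"
    proof -
      have a: "f (x, 1) \<in> fst ` E" "f (x', 1) \<in> fst ` E" using E by force+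
      show ?thesis using between connected_contains_Icc[OF ce a(1) a(2)] connected_contains_Icc[OF ce a(2) a(1)]
        by auto
    qed
    then obtain z where z: "z \<in> E" "fst z = k" by auto
    then obtain x'' where "x'' \<in> U" "z = (f (x'', 1), 1)" using E(2) Tchar by blast
    then show False using fU(2) z k by auto
  qed
  have Cbox: "\<exists>x\<in>U. (f (x, 1), 1) \<in> C \<and> C \<subseteq> {PP U x..QQ U x} \<times> {1}" if C: "C \<in> components T" for C
  proof -
    have Cp: "C \<noteq> {}" "C \<subseteq> T" "connected C" using C by (auto simp: in_components_maximal)
    then obtain c where c: "c \<in> C" by auto
    then obtain x where x: "x \<in> U" "c = (f (x, 1), 1)" using Cp Tchar by blast
    have "C \<subseteq> {PP U x..QQ U x} \<times> {1}"
    proof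
      fix c' assume c': "c' \<in> C"
      then obtain x' where x': "x' \<in> U" "c' = (f (x', 1), 1)" using Cp Tchar by blast
      have "{min x x'..max x x'} \<subseteq> U" using segU[OF Cp(3) Cp(2)] c c' x x' by blast
      then show "c' \<in> {PP U x..QQ U x} \<times> {1}" using L1[OF Uopen x(1) x'(1)] x' by (simp add: f_def)
    qed
    then show ?thesis using x c by blast
  qed
  have clbox: "closure C \<subseteq> {PP U x..QQ U x} \<times> {1::real}" if "C \<subseteq> {PP U x..QQ U x} \<times> {1::real}" for C x
    using closure_minimal[OF that] closed_Times[OF closed_atLeastAtMost[of "PP U x" "QQ U x"] closed_singleton[of "1::real"]] by blast
  have bnd: "\<forall>C\<in>components T. bounded (closure C)"
  proof
    fix C assume "C \<in> components T"
    then obtain x where cx: "C \<subseteq> {PP U x..QQ U x} \<times> {1}" using Cbox by blast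
    have "bounded ({PP U x..QQ U x} \<times> {1::real})" by (intro bounded_Times) auto
    then show "bounded (closure C)" using clbox[OF cx] bounded_subset by blast
  qed
  have disj: "\<forall>C\<in>components T. \<forall>D\<in>components T. C \<noteq> D \<longrightarrow> closure C \<inter> closure D = {}"
  proof (intro ballI impI)
    fix C D assume C: "C \<in> components T" and D: "D \<in> components T" and CD: "C \<noteq> D"
    obtain x where x: "x \<in> U" "(f (x, 1), 1) \<in> C" "C \<subseteq> {PP U x..QQ U x} \<times> {1}" using Cbox[OF C] by blast
    obtain x' where x': "x' \<in> U" "(f (x', 1), 1) \<in> D" "D \<subseteq> {PP U x'..QQ U x'} \<times> {1}" using Cbox[OF D] by blast
    show "closure C \<inter> closure D = {}"
    proof (cases "{min x x'..max x x'} \<subseteq> U")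
      case True
      define E where "E = (\<lambda>z. (f (z, 1), 1::real)) ` {min x x'..max x x'}"
      have Econn: "connected E" unfolding E_def
      proof (rule connected_continuous_image[OF _ connected_Icc])
        have "continuous_on {min x x'..max x x'} (\<lambda>z. f (z, 1))"
          by (rule continuous_on_compose2[OF fcont]) (use True in \<open>auto intro!: continuous_intros simp: U_def\<close>)
        then show "continuous_on {min x x'..max x x'} (\<lambda>z. (f (z, 1), 1::real))"
          by (intro continuous_intros)
      qed
      have ET: "E \<subseteq> T" unfolding E_def using True Tchar by blast
      have Cp: "C \<noteq> {}" "C \<subseteq> T" "connected C"
        "\<And>D. D \<noteq> {} \<and> C \<subseteq> D \<and> D \<subseteq> T \<and> connected D \<Longrightarrow> D = C"
        using C unfolding in_components_maximal by blast+
      have xE: "(f (x, 1), 1) \<in> E" "(f (x', 1), 1) \<in> E" unfolding E_def by (auto intro!: image_eqI)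
      have "C \<union> E = C"
        by (rule Cp(4)) (use Cp ET xE x Econn in \<open>auto intro!: connected_Un\<close>)
      then have "(f (x', 1), 1) \<in> C" using xE by auto
      then have "C \<inter> D \<noteq> {}" using x' by auto
      then show ?thesis using components_nonoverlap[OF C D] CD by simp
    next
      case False
      then obtain k where k: "k \<in> {min x x'..max x x'}" "k \<notin> U" by blast
      have "QQ U x < PP U x' \<or> QQ U x' < PP U x"
      proof (cases "x < x'")
        case True
        then have "x < k" "k < x'" using k x x' by (auto simp: min_def max_def order.order_iff_strict)
        then show ?thesis using L2[OF Uopen x(1) x'(1) k(2)] by auto
      next
        case False
        then have mm: "min x x' = x'" "max x x' = x" by auto
        then have "x' \<le> k" "k \<le> x" "k \<noteq> x'" "k \<noteq> x" using k x x' by auto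
        then have "x' < k" "k < x" by auto
        then show ?thesis using L2[OF Uopen x'(1) x(1) k(2)] by auto
      qed
      then show ?thesis using clbox[OF x(3)] clbox[OF x'(3)] by fastforce
    qed
  qed
  show ?thesis
    apply (rule exI[of _ S'], rule exI[of _ h])
    using hom surj sub bnd disj f0 unfolding T_def by (auto simp: h_def)
qed

end
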